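(* If the dual distance $2$-VC dimension of a graph $G$ is at least $t$, then $K_t$ is a minor of $G$.
   Context: The distance hypergraph $\mathcal{H}(G)$ has vertex set $V(G)$ and, as hyperedges, all balls $B(v,r)=\{u:d(u,v)\leq r\}$ for $v\in V(G)$ and integers $r\geq0$. Its dual $\mathcal{H}(G)^*$ has the hyperedges of $\mathcal{H}(G)$ as vertices and, for each vertex $u$ of $G$, a hyperedge consisting of all balls containing $u$. In a hypergraph, a set $X$ of vertices is $2$-shattered if for every $X'\subseteq X$ with $|X'|=2$ there is a hyperedge $e$ with $e\cap X=X'$; the $2$-VC dimension is the maximum size of a $2$-shattered set. The dual distance $2$-VC dimension of $G$ is the $2$-VC dimension of $\mathcal{H}(G)^*$. Equivalently, it is at least $t$ iff there are balls $B(v_1,r_1),\dots,B(v_t,r_t)$ such that for all $i\neq j$ some vertex $x_{ij}$ satisfies $d(x_{ij},v_i)\le r_i$, $d(x_{ij},v_j)\le r_j$, and $d(x_{ij},v_m)>r_m$ for all $m\notin\{i,j\}$. *)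

theory Defs
  imports Main "HOL-Library.Extended_Nat"
begin

definition simple_graph :: "'a set \<Rightarrow> ('a \<Rightarrow> 'a \<Rightarrow> bool) \<Rightarrow> bool" where
  "simple_graph V E \<longleftrightarrow> finite V \<and> (\<forall>u v. E u v \<longrightarrow> u \<in> V \<and> v \<in> V)
     \<and> (\<forall>u v. E u v \<longrightarrow> E v u) \<and> (\<forall>u. \<not> E u u)"

definition walk_in :: "('a \<Rightarrow> 'a \<Rightarrow> bool) \<Rightarrow> 'a set \<Rightarrow> 'a list \<Rightarrow> bool" where
  "walk_in E S xs \<longleftrightarrow> xs \<noteq> [] \<and> set xs \<subseteq> S \<and> (\<forall>i. Suc i < length xs \<longrightarrow> E (xs ! i) (xs ! Suc i))"

text \<open>Graph distance (infinite if no path).\<close>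
definition gdist :: "'a set \<Rightarrow> ('a \<Rightarrow> 'a \<Rightarrow> bool) \<Rightarrow> 'a \<Rightarrow> 'a \<Rightarrow> enat" where
  "gdist V E u v = (INF n \<in> {n. \<exists>xs. walk_in E V xs \<and> hd xs = u \<and> last xs = v \<and> length xs = Suc n}. enat n)"

definition gball :: "'a set \<Rightarrow> ('a \<Rightarrow> 'a \<Rightarrow> bool) \<Rightarrow> 'a \<Rightarrow> nat \<Rightarrow> 'a set" where
  "gball V E v r = {u \<in> V. gdist V E u v \<le> enat r}"

text \<open>Hypergraphs as (vertex set, set of hyperedges).\<close>
type_synonym 'a hypergraph = "'a set \<times> 'a set set"

definition distance_hypergraph :: "'a set \<Rightarrow> ('a \<Rightarrow> 'a \<Rightarrow> bool) \<Rightarrow> 'a hypergraph" where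
  "distance_hypergraph V E = (V, {gball V E v r | v r. v \<in> V})"

definition dual_hypergraph :: "'a hypergraph \<Rightarrow> 'a set hypergraph" where
  "dual_hypergraph H = (snd H, {{e \<in> snd H. u \<in> e} | u. u \<in> fst H})"

definition k_shattered :: "'a hypergraph \<Rightarrow> nat \<Rightarrow> 'a set \<Rightarrow> bool" where
  "k_shattered H k X \<longleftrightarrow> X \<subseteq> fst H \<and>
     (\<forall>X'. X' \<subseteq> X \<and> finite X' \<and> card X' = k \<longrightarrow> (\<exists>e \<in> snd H. e \<inter> X = X'))"

definition k_VC_dim :: "'a hypergraph \<Rightarrow> nat \<Rightarrow> enat" where
  "k_VC_dim H k = (SUP X \<in> {X. finite X \<and> k_shattered H k X}. enat (card X))"

definition dual_distance_2VC_dim :: "'a set \<Rightarrow> ('a \<Rightarrow> 'a \<Rightarrow> bool) \<Rightarrow> enat" where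
  "dual_distance_2VC_dim V E = k_VC_dim (dual_hypergraph (distance_hypergraph V E)) 2"

text \<open>K_t minor via branch sets: t pairwise disjoint nonempty connected vertex
sets, every two joined by an edge.\<close>
definition connected_set :: "'a set \<Rightarrow> ('a \<Rightarrow> 'a \<Rightarrow> bool) \<Rightarrow> 'a set \<Rightarrow> bool" where
  "connected_set V E S \<longleftrightarrow> S \<subseteq> V \<and>
     (\<forall>x\<in>S. \<forall>y\<in>S. \<exists>xs. walk_in E S xs \<and> hd xs = x \<and> last xs = y)"

definition has_complete_minor :: "'a set \<Rightarrow> ('a \<Rightarrow> 'a \<Rightarrow> bool) \<Rightarrow> nat \<Rightarrow> bool" where
  "has_complete_minor V E t \<longleftrightarrow> (\<exists>B :: nat \<Rightarrow> 'a set.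
     (\<forall>i<t. B i \<noteq> {} \<and> connected_set V E (B i)) \<and>
     (\<forall>i<t. \<forall>j<t. i \<noteq> j \<longrightarrow> B i \<inter> B j = {}) \<and>
     (\<forall>i<t. \<forall>j<t. i \<noteq> j \<longrightarrow> (\<exists>x\<in>B i. \<exists>y\<in>B j. E x y)))"

end

theory Submission
  imports Defs
begin


lemma succ_nth: "(\<forall>i. Suc i < length xs \<longrightarrow> E (xs!i) (xs!Suc i)) \<longleftrightarrow> successively E xs"
proof (induction xs)
  case Nil then show ?case by simp
next
  case (Cons a xs)
  show ?case
  proof (cases xs)
    case Nil then show ?thesis by simp
  next
    case (Cons b ys)
    have "(\<forall>i. Suc i < length (a#xs) \<longrightarrow> E ((a#xs)!i) ((a#xs)!Suc i)) \<longleftrightarrow>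
          E a b \<and> (\<forall>i. Suc i < length xs \<longrightarrow> E (xs!i) (xs!Suc i))"
      using Cons by (auto simp: less_Suc_eq_0_disj)
    then show ?thesis using Cons.IH \<open>xs = b#ys\<close> by simp
  qed
qed

lemma walk_alt: "walk_in E S xs \<longleftrightarrow> xs \<noteq> [] \<and> set xs \<subseteq> S \<and> successively E xs"
  unfolding walk_in_def succ_nth ..

lemma Inf_enat_in: assumes "S \<noteq> {}" shows "(INF n\<in>S. enat n) \<in> enat ` S"
proof -
  have "Inf (enat ` S) = (LEAST x. x \<in> enat ` S)" using assms by (simp add: Inf_enat_def)
  moreover have "(LEAST x. x \<in> enat ` S) \<in> enat ` S"
  proof -
    obtain n where "n \<in> S" using assms by blast
    then have "enat n \<in> enat ` S" by (rule imageI)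
    then show ?thesis by (rule LeastI)
  qed
  ultimately show ?thesis by simp
qed

lemma gdist_le: "walk_in E V xs \<Longrightarrow> hd xs = u \<Longrightarrow> last xs = v \<Longrightarrow> length xs = Suc n \<Longrightarrow> gdist V E u v \<le> enat n"
  unfolding gdist_def by (rule INF_lower2[of n]) auto

lemma gdist_fin: assumes "gdist V E u v = enat n"
  shows "\<exists>xs. walk_in E V xs \<and> hd xs = u \<and> last xs = v \<and> length xs = Suc n"
proof -
  let ?S = "{n. \<exists>xs. walk_in E V xs \<and> hd xs = u \<and> last xs = v \<and> length xs = Suc n}"
  have "?S \<noteq> {}"
  proof
    assume "?S = {}"
    then have "gdist V E u v = \<infinity>" unfolding gdist_def \<open>?S = {}\<close> by (simp add: top_enat_def)
    with assms show False by simp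
  qed
  from Inf_enat_in[OF this] obtain m where "m \<in> ?S" "gdist V E u v = enat m"
    unfolding gdist_def by auto
  then show ?thesis using assms by auto
qed

lemma gdist_refl: assumes "u \<in> V" shows "gdist V E u u = 0"
proof -
  have "gdist V E u u \<le> enat 0" using gdist_le[of E V "[u]" u u 0] assms by (simp add: walk_in_def)
  then show ?thesis by (simp add: zero_enat_def[symmetric])
qed

lemma gdist_edge: "E u w \<Longrightarrow> u \<in> V \<Longrightarrow> w \<in> V \<Longrightarrow> gdist V E u w \<le> 1"
  using gdist_le[of E V "[u,w]" u w 1] by (simp add: walk_alt one_enat_def)

lemma walk_app: "walk_in E S xs \<Longrightarrow> walk_in E S ys \<Longrightarrow> last xs = hd ys \<Longrightarrow>
   walk_in E S (xs @ tl ys) \<and> hd (xs @ tl ys) = hd xs \<and> last (xs @ tl ys) = last ys"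
proof -
  assume xs: "walk_in E S xs" and ys: "walk_in E S ys" and l: "last xs = hd ys"
  obtain y ys' where y: "ys = y # ys'" using ys by (cases ys) (auto simp: walk_in_def)
  have sx: "successively E xs" "xs \<noteq> []" "set xs \<subseteq> S" using xs by (auto simp: walk_alt)
  have sy: "successively E (y # ys')" "set (y#ys') \<subseteq> S" using ys y by (auto simp: walk_alt)
  have "successively E (xs @ ys')"
    unfolding successively_append_iff
  proof (intro conjI)
    show "successively E xs" by (rule sx(1))
    show "successively E ys'" using sy(1) by (cases ys') (auto simp: successively_Cons)
    show "xs = [] \<or> ys' = [] \<or> E (last xs) (hd ys')"
      using sy(1) l y by (auto simp: successively_Cons)
  qed
  moreover have "set (xs @ ys') \<subseteq> S" using sx sy by auto
  moreover have "hd (xs @ ys') = hd xs" using sx by simp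
  moreover have "last (xs @ ys') = last ys" using l y by (cases ys') auto
  ultimately show ?thesis using y sx by (simp add: walk_alt)
qed

lemma walk_rev: "(\<forall>u v. E u v \<longrightarrow> E v u) \<Longrightarrow> walk_in E S xs \<Longrightarrow>
   walk_in E S (rev xs) \<and> hd (rev xs) = last xs \<and> last (rev xs) = hd xs"
proof -
  assume sym: "\<forall>u v. E u v \<longrightarrow> E v u" and w: "walk_in E S xs"
  have s: "successively E xs" "xs \<noteq> []" "set xs \<subseteq> S" using w by (auto simp: walk_alt)
  have "successively (\<lambda>x y. E y x) xs" by (rule successively_mono[OF s(1)]) (use sym in blast)
  then have "successively E (rev xs)" by simp
  then show ?thesis using s by (simp add: walk_alt hd_rev last_rev)
qed

lemma gdist_tri: "gdist V E u w \<le> gdist V E u v + gdist V E v w"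
proof (cases "gdist V E u v = \<infinity> \<or> gdist V E v w = \<infinity>")
  case True then show ?thesis by auto
next
  case False
  then obtain a b where a: "gdist V E u v = enat a" and b: "gdist V E v w = enat b" by auto
  obtain xs where xs: "walk_in E V xs" "hd xs = u" "last xs = v" "length xs = Suc a" using gdist_fin[OF a] by blast
  obtain ys where ys: "walk_in E V ys" "hd ys = v" "last ys = w" "length ys = Suc b" using gdist_fin[OF b] by blast
  have "walk_in E V (xs @ tl ys)" "hd (xs @ tl ys) = u" "last (xs @ tl ys) = w"
    using walk_app[OF xs(1) ys(1)] xs ys by auto
  moreover have "length (xs @ tl ys) = Suc (a + b)" using xs ys by auto
  ultimately have "gdist V E u w \<le> enat (a+b)" by (intro gdist_le)
  then show ?thesis using a b by simp
qed

lemma gdist_step: assumes "gdist V E u v = enat (Suc n)"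
  shows "\<exists>w. E u w \<and> w \<in> V \<and> gdist V E w v = enat n"
proof -
  obtain xs where xs: "walk_in E V xs" "hd xs = u" "last xs = v" "length xs = Suc (Suc n)" using gdist_fin[OF assms] by blast
  then obtain w ys where xs': "xs = u # w # ys" by (cases xs; cases "tl xs") auto
  have e: "E u w" "w \<in> V" "u \<in> V" using xs(1) xs' by (auto simp: walk_alt)
  have "walk_in E V (w#ys)" using xs(1) xs' by (auto simp: walk_alt)
  then have le: "gdist V E w v \<le> enat n" apply (rule gdist_le) using xs xs' by auto
  have "gdist V E u v \<le> gdist V E u w + gdist V E w v" by (rule gdist_tri)
  also have "\<dots> \<le> 1 + gdist V E w v" using gdist_edge[of E u w V] e by (simp add: add_right_mono)
  finally have "enat (Suc n) \<le> 1 + gdist V E w v" using assms by simp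
  with le have "gdist V E w v = enat n"
    by (cases "gdist V E w v") (auto simp: one_enat_def)
  with e show ?thesis by blast
qed



lemma gdist_zero: "gdist V E u v = 0 \<Longrightarrow> u = v"
  using gdist_fin[of V E u v 0] by (auto simp: zero_enat_def walk_in_def) (metis hd_conv_nth last_conv_nth diff_Suc_1 length_0_conv nat.distinct(1))

lemma enat_p1_le: "(a::enat) + 1 \<le> b + 1 \<Longrightarrow> a \<le> b"
  by (cases a; cases b) (auto simp: one_enat_def)
lemma enat_p1_less: "(a::enat) + 1 < b + 1 \<Longrightarrow> a < b"
  by (cases a; cases b) (auto simp: one_enat_def)

lemma enat_add_less: "enat a < x \<Longrightarrow> enat a + enat b < x + enat b"
  by (cases x) auto
lemma enat_add_le: "x \<le> enat a \<Longrightarrow> x + enat b \<le> enat (a + b)"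
  by (cases x) auto

lemma core3:
  fixes V :: "'a set" and E c and r :: "nat \<Rightarrow> nat" and t :: nat
  assumes sg: "simple_graph V E" and t3: "3 \<le> t" and cV: "\<forall>i<t. c i \<in> V"
    and wit: "\<forall>i<t. \<forall>j<t. i \<noteq> j \<longrightarrow> (\<exists>x\<in>V. gdist V E x (c i) \<le> enat (r i) \<and> gdist V E x (c j) \<le> enat (r j)
       \<and> (\<forall>m<t. m \<noteq> i \<and> m \<noteq> j \<longrightarrow> enat (r m) < gdist V E x (c m)))"
  shows "has_complete_minor V E t"
proof -
  have symE: "\<forall>u v. E u v \<longrightarrow> E v u" and EV: "\<And>u v. E u v \<Longrightarrow> u \<in> V \<and> v \<in> V"
    using sg by (auto simp: simple_graph_def)
  define R where "R = (\<Sum>i<t. r i)"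
  have rR: "\<And>i. i < t \<Longrightarrow> r i \<le> R" unfolding R_def
    by (rule member_le_sum) auto
  define g where "g m u = gdist V E u (c m) + enat (R - r m)" for m u
  define lab where "lab u = (LEAST m. m < t \<and> (\<forall>k<t. g m u \<le> g k u))" for u
  define C where "C i = {u \<in> V. gdist V E u (c i) \<noteq> \<infinity> \<and> lab u = i}" for i
  have exmin: "\<exists>m. m < t \<and> (\<forall>k<t. g m u \<le> g k u)" for u
  proof -
    have "0 \<in> {..<t}" using t3 by simp
    then have ne: "(\<lambda>k. g k u) ` {..<t} \<noteq> {}" by blast
    obtain m where "m \<in> {..<t}" "g m u = Min ((\<lambda>k. g k u) ` {..<t})"
      using Min_in[OF _ ne] by auto
    then have "\<forall>k<t. g m u \<le> g k u" by (auto intro: Min_le)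
    then show ?thesis using \<open>m \<in> {..<t}\<close> by blast
  qed
  have labP: "lab u < t \<and> (\<forall>k<t. g (lab u) u \<le> g k u)" for u
    unfolding lab_def by (rule LeastI_ex[OF exmin])
  have labS: "k < lab u \<Longrightarrow> g (lab u) u < g k u" for k u
  proof -
    assume k: "k < lab u"
    then have "\<not> (k < t \<and> (\<forall>k'<t. g k u \<le> g k' u))" unfolding lab_def by (rule not_less_Least)
    moreover have "k < t" using k labP[of u] by simp
    ultimately obtain k' where "k' < t" "g k' u < g k u" by (auto simp: not_le)
    moreover have "g (lab u) u \<le> g k' u" using labP[of u] \<open>k' < t\<close> by blast
    ultimately show ?thesis by (meson order.strict_trans1)
  qed
  have labI2: "lab u = i" if "i < t" "\<forall>k<t. g i u \<le> g k u" "\<forall>k<i. g i u < g k u" for u i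
    unfolding lab_def
  proof (rule Least_equality)
    show "i < t \<and> (\<forall>k<t. g i u \<le> g k u)" using that by auto
    show "i \<le> y" if "y < t \<and> (\<forall>k<t. g y u \<le> g k u)" for y
    proof (rule ccontr)
      assume "\<not> i \<le> y"
      then have "g i u < g y u" using \<open>\<forall>k<i. g i u < g k u\<close> by auto
      moreover have "g y u \<le> g i u" using that \<open>i < t\<close> by auto
      ultimately show False by simp
    qed
  qed
  have labI: "lab u = i" if "i < t" "\<forall>k<t. k \<noteq> i \<longrightarrow> g i u < g k u" for u i
    using that by (intro labI2) (auto simp: le_less)
  have gedge: "g k u \<le> g k w + 1" if "E u w" for k u w
  proof -
    have uw: "u \<in> V" "w \<in> V" using EV[OF that] by auto
    have "gdist V E u (c k) \<le> gdist V E u w + gdist V E w (c k)" by (rule gdist_tri)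
    also have "\<dots> \<le> 1 + gdist V E w (c k)" using gdist_edge[of E u w V] that uw by (simp add: add_right_mono)
    finally have "gdist V E u (c k) + enat (R - r k) \<le> (1 + gdist V E w (c k)) + enat (R - r k)"
      by (rule add_right_mono)
    also have "(1 + gdist V E w (c k)) + enat (R - r k) = (gdist V E w (c k) + enat (R - r k)) + 1"
      by (simp only: add.commute add.left_commute)
    finally show ?thesis unfolding g_def .
  qed
  have step: "\<exists>w. E u w \<and> w \<in> V \<and> gdist V E w (c i) = enat n \<and> g i u = g i w + 1
      \<and> (\<forall>k. g k u \<le> g k w + 1)"
    if gs: "gdist V E u (c i) = enat (Suc n)" for u i n
  proof -
    obtain w where w: "E u w" "w \<in> V" "gdist V E w (c i) = enat n" using gdist_step[OF gs] by blast
    have "g i u = g i w + 1" unfolding g_def using gs w(3) by (simp add: one_enat_def)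
    with w gedge show ?thesis by blast
  qed
  have tocenter: "\<forall>u. u \<in> C i \<longrightarrow> gdist V E u (c i) = enat n \<longrightarrow>
      (\<exists>xs. walk_in E (C i) xs \<and> hd xs = u \<and> last xs = c i)" for i n
  proof (induction n)
    case 0
    show ?case
    proof (intro allI impI)
      fix u assume "u \<in> C i" "gdist V E u (c i) = enat 0"
      then have "u = c i" using gdist_zero[of V E u "c i"] by (simp add: zero_enat_def)
      then show "\<exists>xs. walk_in E (C i) xs \<and> hd xs = u \<and> last xs = c i"
        using \<open>u \<in> C i\<close> by (intro exI[of _ "[u]"]) (auto simp: walk_in_def)
    qed
  next
    case (Suc n)
    show ?case
    proof (intro allI impI)
      fix u assume u: "u \<in> C i" "gdist V E u (c i) = enat (Suc n)"
      obtain w where w: "E u w" "w \<in> V" "gdist V E w (c i) = enat n" "g i u = g i w + 1"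
        "\<forall>k. g k u \<le> g k w + 1" using step[OF u(2)] by blast
      have li: "lab u = i" using u(1) by (simp add: C_def)
      have "lab w = i"
      proof (rule labI2)
        show "i < t" using labP[of u] li by simp
        show "\<forall>k<t. g i w \<le> g k w"
        proof (intro allI impI)
          fix k assume k: "k < t"
          have "g i w + 1 = g i u" using w(4) by simp
          also have "\<dots> \<le> g k u" using labP[of u] li k by auto
          also have "\<dots> \<le> g k w + 1" using w(5) by blast
          finally have "g i w + 1 \<le> g k w + 1" .
          then show "g i w \<le> g k w" by (rule enat_p1_le)
        qed
        show "\<forall>k<i. g i w < g k w"
        proof (intro allI impI)
          fix k assume k: "k < i"
          have "g i w + 1 = g i u" using w(4) by simp
          also have "\<dots> < g k u" using labS[of k u] li k by auto
          also have "\<dots> \<le> g k w + 1" using w(5) by blast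
          finally have "g i w + 1 < g k w + 1" .
          then show "g i w < g k w" by (rule enat_p1_less)
        qed
      qed
      then have wC: "w \<in> C i" using w by (simp add: C_def)
      obtain ys where ys: "walk_in E (C i) ys" "hd ys = w" "last ys = c i"
        using Suc.IH wC w(3) by blast
      show "\<exists>xs. walk_in E (C i) xs \<and> hd xs = u \<and> last xs = c i"
      proof (intro exI conjI)
        have "successively E (u # ys)" using ys w(1) by (simp add: successively_Cons walk_alt)
        moreover have "set (u # ys) \<subseteq> C i" using ys(1) u(1) by (simp add: walk_alt)
        ultimately show "walk_in E (C i) (u # ys)" by (simp add: walk_alt)
        show "hd (u # ys) = u" by simp
        show "last (u # ys) = c i" using ys by (simp add: walk_alt)
      qed
    qed
  qed
  have conn: "connected_set V E (C i)" for i
    unfolding connected_set_def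
  proof (intro conjI ballI)
    show "C i \<subseteq> V" by (auto simp: C_def)
    fix x y assume xy: "x \<in> C i" "y \<in> C i"
    obtain nx where nx: "gdist V E x (c i) = enat nx" using xy(1) by (auto simp: C_def)
    obtain ny where ny: "gdist V E y (c i) = enat ny" using xy(2) by (auto simp: C_def)
    obtain xs where xs: "walk_in E (C i) xs" "hd xs = x" "last xs = c i" using tocenter[of i nx] xy(1) nx by blast
    obtain ys where ys: "walk_in E (C i) ys" "hd ys = y" "last ys = c i" using tocenter[of i ny] xy(2) ny by blast
    have r: "walk_in E (C i) (rev ys)" "hd (rev ys) = c i" "last (rev ys) = y"
      using walk_rev[OF symE ys(1)] ys by simp_all
    have a: "walk_in E (C i) (xs @ tl (rev ys)) \<and> hd (xs @ tl (rev ys)) = hd xs \<and> last (xs @ tl (rev ys)) = last (rev ys)"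
      using walk_app[OF xs(1) r(1)] xs(3) r(2) by simp
    show "\<exists>xs. walk_in E (C i) xs \<and> hd xs = x \<and> last xs = y"
      using a xs(2) r(3) by (intro exI[of _ "xs @ tl (rev ys)"]) simp
  qed
  have ci_lab: "lab (c i) = i" if it: "i < t" for i
  proof (rule labI[OF it], intro allI impI)
    fix k assume k: "k < t" "k \<noteq> i"
    show "g i (c i) < g k (c i)"
    proof (rule ccontr)
      assume "\<not> g i (c i) < g k (c i)"
      then have le: "g k (c i) \<le> g i (c i)" by simp
      have gi: "g i (c i) = enat (R - r i)" unfolding g_def using gdist_refl[of "c i" V E] cV it by simp
      obtain d where d: "gdist V E (c i) (c k) = enat d" using le gi unfolding g_def
        by (cases "gdist V E (c i) (c k)") auto
      have "d + (R - r k) \<le> R - r i" using le gi d unfolding g_def by simp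
      then have dk: "d + r i \<le> r k" using rR[OF it] rR[OF k(1)] by linarith
      have "\<exists>m::nat. m < 3 \<and> m \<noteq> i \<and> m \<noteq> k" by presburger
      then obtain m where m: "m < t" "m \<noteq> i" "m \<noteq> k" using t3 by (meson less_le_trans)
      obtain x where x: "x \<in> V" "gdist V E x (c i) \<le> enat (r i)"
          "\<forall>m'<t. m' \<noteq> i \<and> m' \<noteq> m \<longrightarrow> enat (r m') < gdist V E x (c m')"
        using wit[rule_format, OF it m(1) not_sym[OF m(2)]] by blast
      have xk: "enat (r k) < gdist V E x (c k)" using x(3) k m by auto
      have "gdist V E x (c k) \<le> gdist V E x (c i) + gdist V E (c i) (c k)" by (rule gdist_tri)
      also have "\<dots> \<le> enat (r i) + enat d" using x(2) d using enat_add_le[OF x(2), of d] by simp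
      also have "\<dots> \<le> enat (r k)" using dk by simp
      finally show False using xk by simp
    qed
  qed
  have ciC: "c i \<in> C i" if "i < t" for i
    using ci_lab[OF that] cV that gdist_refl[of "c i" V E] by (simp add: C_def zero_enat_def)
  have adj: "\<forall>u. u \<in> V \<longrightarrow> gdist V E u (c i) = enat n \<longrightarrow> (\<forall>k<t. k \<noteq> i \<and> k \<noteq> j \<longrightarrow> g i u < g k u)
      \<longrightarrow> lab u = j \<longrightarrow> (\<exists>a\<in>C j. \<exists>b\<in>C i. E a b)" if ij: "i < t" "j < t" "i \<noteq> j" for i j n
  proof (induction n)
    case 0
    show ?case
    proof (intro allI impI)
      fix u assume u: "u \<in> V" "gdist V E u (c i) = enat 0" "lab u = j"
      then have "u = c i" using gdist_zero[of V E u "c i"] by (simp add: zero_enat_def)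
      then have "lab u = i" using ci_lab ij by simp
      with u(3) ij(3) show "\<exists>a\<in>C j. \<exists>b\<in>C i. E a b" by simp
    qed
  next
    case (Suc n)
    show ?case
    proof (intro allI impI)
      fix u assume u: "u \<in> V" "gdist V E u (c i) = enat (Suc n)"
        "\<forall>k<t. k \<noteq> i \<and> k \<noteq> j \<longrightarrow> g i u < g k u" "lab u = j"
      obtain w where w: "E u w" "w \<in> V" "gdist V E w (c i) = enat n" "g i u = g i w + 1"
        "\<forall>k. g k u \<le> g k w + 1" using step[OF u(2)] by blast
      have Qw: "\<forall>k<t. k \<noteq> i \<and> k \<noteq> j \<longrightarrow> g i w < g k w"
      proof (intro allI impI)
        fix k assume k: "k < t" "k \<noteq> i \<and> k \<noteq> j"
        have "g i w + 1 = g i u" using w(4) by simp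
        also have "\<dots> < g k u" using u(3) k by blast
        also have "\<dots> \<le> g k w + 1" using w(5) by blast
        finally show "g i w < g k w" by (rule enat_p1_less)
      qed
      have lw: "lab w = i \<or> lab w = j"
      proof (rule ccontr)
        assume "\<not> (lab w = i \<or> lab w = j)"
        then have "g i w < g (lab w) w" using Qw labP[of w] by blast
        moreover have "g (lab w) w \<le> g i w" using labP[of w] ij by blast
        ultimately show False by simp
      qed
      show "\<exists>a\<in>C j. \<exists>b\<in>C i. E a b"
      proof (cases "lab w = i")
        case True
        then have wC: "w \<in> C i" using w by (simp add: C_def)
        have "g j u \<le> g i u" using labP[of u] u(4) ij by auto
        moreover have "g i u \<noteq> \<infinity>" using u(2) by (simp add: g_def)
        ultimately have "g j u \<noteq> \<infinity>" by (metis enat_ord_simps(5) top.extremum_uniqueI top_enat_def)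
        then have "gdist V E u (c j) \<noteq> \<infinity>" unfolding g_def by (cases "gdist V E u (c j)") auto
        then have uC: "u \<in> C j" using u by (simp add: C_def)
        show ?thesis using uC wC w(1) by blast
      next
        case False
        with lw have "lab w = j" by simp
        then show ?thesis using Suc.IH w(2) w(3) Qw by blast
      qed
    qed
  qed
  have adj2: "\<exists>a\<in>C i. \<exists>b\<in>C j. E a b" if ij: "i < t" "j < t" "i \<noteq> j" for i j
  proof -
    obtain x where x: "x \<in> V" "gdist V E x (c i) \<le> enat (r i)" "gdist V E x (c j) \<le> enat (r j)"
        "\<forall>m<t. m \<noteq> i \<and> m \<noteq> j \<longrightarrow> enat (r m) < gdist V E x (c m)"
      using wit[rule_format, OF ij] by blast
    have gi: "g i x \<le> enat R" using enat_add_le[OF x(2), of "R - r i"] rR[OF ij(1)] by (simp add: g_def)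
    have gj: "g j x \<le> enat R" using enat_add_le[OF x(3), of "R - r j"] rR[OF ij(2)] by (simp add: g_def)
    have gk: "enat R < g k x" if "k < t" "k \<noteq> i" "k \<noteq> j" for k
      using enat_add_less[of "r k" "gdist V E x (c k)" "R - r k"] x(4) that rR[OF that(1)] by (simp add: g_def)
    have Qi: "\<forall>k<t. k \<noteq> i \<and> k \<noteq> j \<longrightarrow> g i x < g k x" using gi gk by (meson order.strict_trans1)
    have Qj: "\<forall>k<t. k \<noteq> j \<and> k \<noteq> i \<longrightarrow> g j x < g k x" using gj gk by (meson order.strict_trans1)
    have lx: "lab x = i \<or> lab x = j"
    proof (rule ccontr)
      assume "\<not> (lab x = i \<or> lab x = j)"
      then have "enat R < g (lab x) x" using gk labP[of x] by blast
      moreover have "g (lab x) x \<le> g i x" using labP[of x] ij by blast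
      ultimately show False using gi by simp
    qed
    obtain ni where ni: "gdist V E x (c i) = enat ni" using x(2) by (cases "gdist V E x (c i)") auto
    obtain nj where nj: "gdist V E x (c j) = enat nj" using x(3) by (cases "gdist V E x (c j)") auto
    show ?thesis
    proof (cases "lab x = i")
      case True
      have "\<exists>a\<in>C i. \<exists>b\<in>C j. E a b"
        using adj[of j i nj] ij x(1) nj Qj True by blast
      then show ?thesis .
    next
      case False
      with lx have "lab x = j" by simp
      then have "\<exists>a\<in>C j. \<exists>b\<in>C i. E a b"
        using adj[of i j ni] ij x(1) ni Qi by blast
      then show ?thesis using symE by blast
    qed
  qed
  show ?thesis
    unfolding has_complete_minor_def
  proof (intro exI[of _ C] conjI allI impI)
    fix i assume "i < t"
    then show "C i \<noteq> {}" using ciC by blast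
    show "connected_set V E (C i)" by (rule conn)
  next
    fix i j assume "i < t" "j < t" "i \<noteq> j"
    then show "C i \<inter> C j = {}" by (auto simp: C_def)
  next
    fix i j assume "i < t" "j < t" "i \<noteq> j"
    then show "\<exists>x\<in>C i. \<exists>y\<in>C j. E x y" by (rule adj2)
  qed
qed


lemma sup_enat_ex:
  assumes "enat t \<le> (SUP x\<in>A. enat (f x))" "0 < t"
  shows "\<exists>x\<in>A. t \<le> f x"
proof (rule ccontr)
  assume "\<not> (\<exists>x\<in>A. t \<le> f x)"
  then have "\<forall>x\<in>A. enat (f x) \<le> enat (t - 1)" by auto
  then have "(SUP x\<in>A. enat (f x)) \<le> enat (t - 1)" by (intro SUP_least) auto
  from order.trans[OF assms(1) this] have "t \<le> t - 1" by simp
  with assms(2) show False by simp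
qed

lemma shat_sub: "k_shattered H k X \<Longrightarrow> Y \<subseteq> X \<Longrightarrow> k_shattered H k Y"
  unfolding k_shattered_def
proof (intro conjI allI impI)
  assume a: "X \<subseteq> fst H \<and> (\<forall>X'. X' \<subseteq> X \<and> finite X' \<and> card X' = k \<longrightarrow> (\<exists>e\<in>snd H. e \<inter> X = X'))"
    and y: "Y \<subseteq> X"
  then show "Y \<subseteq> fst H" by blast
  fix X' assume x: "X' \<subseteq> Y \<and> finite X' \<and> card X' = k"
  have "X' \<subseteq> X" using x y by blast
  then obtain e where "e \<in> snd H" "e \<inter> X = X'" using a x by blast
  then have "e \<inter> Y = X'" using x y by blast
  then show "\<exists>e\<in>snd H. e \<inter> Y = X'" using \<open>e \<in> snd H\<close> by blast
qed

lemma noedge_ball: assumes "\<forall>a b. \<not> E a b" "u \<in> gball V E v r" shows "u = v"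
proof -
  have "gdist V E u v \<le> enat r" using assms(2) by (simp add: gball_def)
  then obtain n where n: "gdist V E u v = enat n" by (cases "gdist V E u v") auto
  obtain xs where xs: "walk_in E V xs" "hd xs = u" "last xs = v" "length xs = Suc n"
    using gdist_fin[OF n] by blast
  have "n = 0"
  proof (rule ccontr)
    assume "n \<noteq> 0"
    then have "E (xs!0) (xs!Suc 0)" using xs(1,4) unfolding walk_in_def by auto
    with assms(1) show False by blast
  qed
  then obtain x where "xs = [x]" using xs(4) by (cases xs) auto
  then show ?thesis using xs by simp
qed

lemma conn_single: "v \<in> V \<Longrightarrow> connected_set V E {v}"
  unfolding connected_set_def by (auto intro!: exI[of _ "[v]"] simp: walk_in_def)

theorem theorem6:
  fixes V :: "'a set" and E :: "'a \<Rightarrow> 'a \<Rightarrow> bool" and t :: nat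
  assumes "simple_graph V E"
    and "enat t \<le> dual_distance_2VC_dim V E"
  shows "has_complete_minor V E t"
proof (cases "t = 0")
  case True
  then show ?thesis unfolding has_complete_minor_def by auto
next
  case False
  define H where "H = dual_hypergraph (distance_hypergraph V E)"
  define balls where "balls = {gball V E v r |v r. v \<in> V}"
  have fstH: "fst H = balls" by (simp add: H_def dual_hypergraph_def distance_hypergraph_def balls_def)
  have sndH: "snd H = {{e \<in> balls. u \<in> e} | u. u \<in> V}"
    by (simp add: H_def dual_hypergraph_def distance_hypergraph_def balls_def)
  obtain X where X: "finite X" "k_shattered H 2 X" "t \<le> card X"
    using sup_enat_ex[OF assms(2)[unfolded dual_distance_2VC_dim_def k_VC_dim_def H_def[symmetric]]] False
    by auto
  obtain Y where Y: "Y \<subseteq> X" "card Y = t" using obtain_subset_with_card_n[OF X(3)] by blast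
  have fY: "finite Y" using Y(1) X(1) finite_subset by blast
  have sY: "k_shattered H 2 Y" using shat_sub[OF X(2) Y(1)] .
  obtain Bl where Bl: "bij_betw Bl {0..<t} Y" using ex_bij_betw_nat_finite[OF fY] Y(2) by blast
  have injB: "Bl i \<noteq> Bl j" if "i < t" "j < t" "i \<noteq> j" for i j
    using Bl that unfolding bij_betw_def inj_on_def by auto
  have BlY: "Bl i \<in> Y" if "i < t" for i using Bl that unfolding bij_betw_def by auto
  have Yb: "Y \<subseteq> balls" using sY fstH unfolding k_shattered_def by simp
  have "\<forall>i\<in>{..<t}. \<exists>p. fst p \<in> V \<and> Bl i = gball V E (fst p) (snd p)"
  proof
    fix i assume "i \<in> {..<t}"
    then have "Bl i \<in> balls" using BlY Yb by auto
    then show "\<exists>p. fst p \<in> V \<and> Bl i = gball V E (fst p) (snd p)" unfolding balls_def by auto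
  qed
  then obtain p where p: "\<forall>i\<in>{..<t}. fst (p i) \<in> V \<and> Bl i = gball V E (fst (p i)) (snd (p i))"
    by (metis bchoice)
  define c where "c i = fst (p i)" for i
  define r where "r i = snd (p i)" for i
  have cr: "c i \<in> V" "Bl i = gball V E (c i) (r i)" if "i < t" for i
    using p that by (auto simp: c_def r_def)
  have wit0: "\<exists>u\<in>V. u \<in> Bl i \<and> u \<in> Bl j \<and> (\<forall>m<t. m \<noteq> i \<and> m \<noteq> j \<longrightarrow> u \<notin> Bl m)"
    if ij: "i < t" "j < t" "i \<noteq> j" for i j
  proof -
    have "{Bl i, Bl j} \<subseteq> Y \<and> finite {Bl i, Bl j} \<and> card {Bl i, Bl j} = 2"
      using BlY ij injB by auto
    then have pr: "{Bl i, Bl j} \<subseteq> Y" "finite {Bl i, Bl j}" "card {Bl i, Bl j} = 2" by auto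
    have allsh: "\<forall>X'. X' \<subseteq> Y \<and> finite X' \<and> card X' = 2 \<longrightarrow> (\<exists>e\<in>snd H. e \<inter> Y = X')"
      using sY unfolding k_shattered_def by (elim conjE)
    have "\<exists>e\<in>snd H. e \<inter> Y = {Bl i, Bl j}" using allsh pr by simp
    then obtain e where e: "e \<in> snd H" "e \<inter> Y = {Bl i, Bl j}" by blast
    from e(1) obtain u where u: "u \<in> V" "e = {b \<in> balls. u \<in> b}" unfolding sndH by blast
    have "Bl i \<in> e" "Bl j \<in> e" using e(2) by (simp_all add: set_eq_iff) blast+
    then have "u \<in> Bl i" "u \<in> Bl j" using u(2) by simp_all
    moreover have "u \<notin> Bl m" if m: "m < t" "m \<noteq> i" "m \<noteq> j" for m
    proof
      assume um: "u \<in> Bl m"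
      have "Bl m \<in> balls" "Bl m \<in> Y" using BlY[OF m(1)] Yb by auto
      then have "Bl m \<in> e \<inter> Y" using u(2) um by simp
      then have "Bl m = Bl i \<or> Bl m = Bl j" using e(2) by simp
      then show False using injB m ij by metis
    qed
    ultimately show ?thesis using u(1) by blast
  qed
  show ?thesis
  proof (cases "3 \<le> t")
    case True
    show ?thesis
    proof (rule core3[OF assms(1) True, of c r])
      show "\<forall>i<t. c i \<in> V" using cr by blast
      show "\<forall>i<t. \<forall>j<t. i \<noteq> j \<longrightarrow> (\<exists>x\<in>V. gdist V E x (c i) \<le> enat (r i) \<and> gdist V E x (c j) \<le> enat (r j)
       \<and> (\<forall>m<t. m \<noteq> i \<and> m \<noteq> j \<longrightarrow> enat (r m) < gdist V E x (c m)))"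
      proof (intro allI impI)
        fix i j assume ij: "i < t" "j < t" "i \<noteq> j"
        obtain u where u: "u \<in> V" "u \<in> Bl i" "u \<in> Bl j" "\<forall>m<t. m \<noteq> i \<and> m \<noteq> j \<longrightarrow> u \<notin> Bl m"
          using wit0[OF ij] by blast
        have "\<forall>m<t. m \<noteq> i \<and> m \<noteq> j \<longrightarrow> enat (r m) < gdist V E u (c m)"
          using u(1,4) cr(2) by (auto simp: gball_def not_le)
        moreover have "gdist V E u (c i) \<le> enat (r i)" "gdist V E u (c j) \<le> enat (r j)"
          using u(2,3) cr(2) ij by (auto simp: gball_def)
        ultimately show "\<exists>x\<in>V. gdist V E x (c i) \<le> enat (r i) \<and> gdist V E x (c j) \<le> enat (r j)
          \<and> (\<forall>m<t. m \<noteq> i \<and> m \<noteq> j \<longrightarrow> enat (r m) < gdist V E x (c m))" using u(1) by blast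
      qed
    qed
  next
    case False
    have symE: "\<forall>u v. E u v \<longrightarrow> E v u" and EV: "\<And>u v. E u v \<Longrightarrow> u \<in> V \<and> v \<in> V"
      and irr: "\<And>u. \<not> E u u"
      using assms(1) by (auto simp: simple_graph_def)
    show ?thesis
    proof (cases "t = 1")
      case True
      have c0: "c 0 \<in> V" using cr True by simp
      show ?thesis unfolding has_complete_minor_def
      proof (intro exI[of _ "\<lambda>_. {c 0}"] conjI allI impI)
        fix i assume "i < t"
        show "{c 0} \<noteq> {}" by simp
        show "connected_set V E {c 0}"
          by (rule conn_single[OF c0])
      next
        fix i j assume "i < t" "j < t" "i \<noteq> j"
        then show "{c 0} \<inter> {c 0} = {}" using True by simp
      next
        fix i j assume "i < t" "j < t" "i \<noteq> j"
        then show "\<exists>x\<in>{c 0}. \<exists>y\<in>{c 0}. E x y" using True by simp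
      qed
    next
      case t1: False
      with False \<open>t \<noteq> 0\<close> have t2: "t = 2" by simp
      obtain u where u: "u \<in> V" "u \<in> Bl 0" "u \<in> Bl 1" using wit0[of 0 1] t2 by auto
      have "\<exists>a b. E a b"
      proof (rule ccontr)
        assume ne: "\<not> (\<exists>a b. E a b)"
        have single: "gball V E v q = {v}" if "v \<in> V" for v q
        proof
          show "gball V E v q \<subseteq> {v}" using noedge_ball[of E _ V v q] ne by blast
          show "{v} \<subseteq> gball V E v q" using that gdist_refl[of v V E] by (simp add: gball_def zero_enat_def)
        qed
        have "u = c 0" using noedge_ball[of E u V "c 0" "r 0"] ne u(2) cr(2)[of 0] t2 by auto
        moreover have "u = c 1" using noedge_ball[of E u V "c 1" "r 1"] ne u(3) cr(2)[of 1] t2 by auto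
        ultimately have "Bl 0 = Bl 1" using cr[of 0] cr[of 1] t2 single by simp
        then show False using injB[of 0 1] t2 by simp
      qed
      then obtain a b where ab: "E a b" by blast
      have ab': "a \<noteq> b" using ab irr by blast
      have aV: "a \<in> V" "b \<in> V" using EV[OF ab] by auto
      show ?thesis unfolding has_complete_minor_def
      proof (intro exI[of _ "\<lambda>i. if i = 0 then {a} else {b}"] conjI allI impI)
        fix i assume "i < t"
        show "(if i = 0 then {a} else {b}) \<noteq> {}" by simp
        show "connected_set V E (if i = 0 then {a} else {b})"
          using conn_single[OF aV(1), of E] conn_single[OF aV(2), of E] by simp
      next
        fix i j assume "i < t" "j < t" "i \<noteq> j"
        then show "(if i = 0 then {a} else {b}) \<inter> (if j = 0 then {a} else {b}) = {}" using ab' t2 by auto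
      next
        fix i j assume "i < t" "j < t" "i \<noteq> j"
        then have "(i = 0 \<and> j = 1) \<or> (i = 1 \<and> j = 0)" using t2 by auto
        then show "\<exists>x\<in>(if i = 0 then {a} else {b}). \<exists>y\<in>(if j = 0 then {a} else {b}). E x y"
          using ab symE by auto
      qed
    qed
  qed
qed


end
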